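(* For every $b,b'\in\mathbb R$ and all $p,q\in\Delta_d$, \[ \ell^\Theta_{\mathrm C}(L_bp,L_{b'}q)\le\ell^\Theta_{\mathrm C}(p,q)+\Delta^{-1/2}|b-b'|. \]
   Context: $\Theta=\{\theta_1<\dots<\theta_d\}$ with constant stride $\Delta>0$; $\Delta_d$ the probability simplex of $\mathbb R^d$. For $u\in\Delta_d$, $\eta^{u,0}:=\sum_ku_k\delta_{\theta_k}$. Categorical projection $\Pi^\Theta_{\mathrm C}$: $\delta_x\mapsto\delta_{\theta_1}$ if $x\le\theta_1$, $\delta_{\theta_d}$ if $x\ge\theta_d$, $\frac{\theta_{k+1}-x}{\Delta}\delta_{\theta_k}+\frac{x-\theta_k}{\Delta}\delta_{\theta_{k+1}}$ if $\theta_k\le x\le\theta_{k+1}$, extended linearly to laws. For $b\in\mathbb R$, $L_b:\Delta_d\to\Delta_d$ is defined by $\Pi^\Theta_{\mathrm C}(\text{law of }X+b,\ X\sim\eta^{u,0})=\eta^{L_bu,0}$. Coordinate Cramér metric: $F_u(\theta_k):=\sum_{j\le k}u_j$, $\ell^\Theta_{\mathrm C}(u,v)^2:=\Delta\sum_{k=1}^{d-1}(F_u(\theta_k)-F_v(\theta_k))^2$. *)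

theory Defs
  imports Complex_Main
begin

text \<open>Vectors in R^d are functions nat => real indexed by 1..d.\<close>

definition theta :: "real \<Rightarrow> real \<Rightarrow> nat \<Rightarrow> real" where
  "theta t1 Dl k = t1 + (real k - 1) * Dl"

definition simplex :: "nat \<Rightarrow> (nat \<Rightarrow> real) set" where
  "simplex d = {u. (\<forall>k\<in>{1..d}. 0 \<le> u k) \<and> (\<Sum>k=1..d. u k) = 1}"

text \<open>Categorical projection of the Dirac mass at x, as a weight vector on the grid.
  For theta_1 < x < theta_d, j is the index with theta_j <= x < theta_(j+1).\<close>
definition cat_proj_dirac :: "real \<Rightarrow> real \<Rightarrow> nat \<Rightarrow> real \<Rightarrow> nat \<Rightarrow> real" where
  "cat_proj_dirac t1 Dl d x k =
     (if x \<le> theta t1 Dl 1 then (if k = 1 then 1 else 0)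
      else if x \<ge> theta t1 Dl d then (if k = d then 1 else 0)
      else (let j = nat \<lfloor>(x - t1) / Dl\<rfloor> + 1 in
              if k = j then (theta t1 Dl (j+1) - x) / Dl
              else if k = j + 1 then (x - theta t1 Dl j) / Dl
              else 0))"

text \<open>L_b u: categorical projection of the law of X + b with X ~ sum_k u_k delta_theta_k
  (projection extended linearly to mixtures).\<close>
definition L_shift :: "real \<Rightarrow> real \<Rightarrow> nat \<Rightarrow> real \<Rightarrow> (nat \<Rightarrow> real) \<Rightarrow> (nat \<Rightarrow> real)" where
  "L_shift t1 Dl d b u = (\<lambda>k. \<Sum>j=1..d. u j * cat_proj_dirac t1 Dl d (theta t1 Dl j + b) k)"

definition cdf_vec :: "(nat \<Rightarrow> real) \<Rightarrow> nat \<Rightarrow> real" where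
  "cdf_vec u k = (\<Sum>j=1..k. u j)"

definition cramer_dist :: "real \<Rightarrow> nat \<Rightarrow> (nat \<Rightarrow> real) \<Rightarrow> (nat \<Rightarrow> real) \<Rightarrow> real" where
  "cramer_dist Dl d u v = sqrt (Dl * (\<Sum>k=1..d-1. (cdf_vec u k - cdf_vec v k)^2))"

end

theory Submission imports Defs "HOL-Analysis.L2_Norm" "HOL-Analysis.Convex" begin

definition clampr :: "real \<Rightarrow> real \<Rightarrow> real \<Rightarrow> real" where
  "clampr a c y = max a (min c y)"

definition hh :: "real \<Rightarrow> real \<Rightarrow> nat \<Rightarrow> real \<Rightarrow> real" where
  "hh t1 Dl k y = (theta t1 Dl (k+1) - clampr (theta t1 Dl k) (theta t1 Dl (k+1)) y) / Dl"

lemma theta_Suc: "theta t1 Dl (Suc k) = theta t1 Dl k + Dl"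
  by (simp add: theta_def algebra_simps)

lemma theta_le: "Dl > 0 \<Longrightarrow> i \<le> j \<Longrightarrow> theta t1 Dl i \<le> theta t1 Dl j"
  by (simp add: theta_def)

lemma clamp_add: "a \<le> b \<Longrightarrow> b \<le> c \<Longrightarrow> clampr a b y + clampr b c y = clampr a c y + b"
  by (simp add: clampr_def max_def min_def)

lemma clamp_telescope:
  assumes "Dl > 0"
  shows "(\<Sum>k=1..n. clampr (theta t1 Dl k) (theta t1 Dl (k+1)) y' - clampr (theta t1 Dl k) (theta t1 Dl (k+1)) y)
     = clampr (theta t1 Dl 1) (theta t1 Dl (n+1)) y' - clampr (theta t1 Dl 1) (theta t1 Dl (n+1)) y"
proof (induction n)
  case 0
  then show ?case by (simp add: clampr_def)
next
  case (Suc n)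
  have a: "theta t1 Dl 1 \<le> theta t1 Dl (n+1)" "theta t1 Dl (n+1) \<le> theta t1 Dl (n+2)"
    using theta_le[OF assms] by auto
  show ?case
    using Suc clamp_add[OF a, of y] clamp_add[OF a, of y'] by (simp add: algebra_simps)
qed

lemma clamp_lip: "a \<le> c \<Longrightarrow> x \<le> x' \<Longrightarrow> 0 \<le> clampr a c x' - clampr a c x \<and> clampr a c x' - clampr a c x \<le> x' - x"
  by (simp add: clampr_def max_def min_def)

lemma hh_bounds: "Dl > 0 \<Longrightarrow> 0 \<le> hh t1 Dl k x \<and> hh t1 Dl k x \<le> 1"
  by (simp add: hh_def clampr_def theta_Suc max_def min_def divide_simps)

lemma hh_lip: assumes "Dl > 0" "x \<le> x'"
  shows "0 \<le> hh t1 Dl k x - hh t1 Dl k x' \<and> hh t1 Dl k x - hh t1 Dl k x' \<le> (x' - x) / Dl"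
proof -
  have le: "theta t1 Dl k \<le> theta t1 Dl (k+1)" using theta_le[OF assms(1)] by simp
  have eq: "hh t1 Dl k x - hh t1 Dl k x' = (clampr (theta t1 Dl k) (theta t1 Dl (k+1)) x' - clampr (theta t1 Dl k) (theta t1 Dl (k+1)) x) / Dl"
    by (simp add: hh_def diff_divide_distrib)
  show ?thesis unfolding eq using clamp_lip[OF le assms(2)] assms(1)
    by (simp add: divide_right_mono)
qed

lemma hh_sum: assumes "Dl > 0" "x \<le> x'"
  shows "(\<Sum>k=1..n. hh t1 Dl k x - hh t1 Dl k x') \<le> (x' - x) / Dl"
proof -
  have eq: "\<And>k. hh t1 Dl k x - hh t1 Dl k x' = (clampr (theta t1 Dl k) (theta t1 Dl (k+1)) x' - clampr (theta t1 Dl k) (theta t1 Dl (k+1)) x) / Dl"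
    by (simp add: hh_def diff_divide_distrib)
  have le: "theta t1 Dl 1 \<le> theta t1 Dl (n+1)" using theta_le[OF assms(1)] by simp
  have "(\<Sum>k=1..n. hh t1 Dl k x - hh t1 Dl k x') = (clampr (theta t1 Dl 1) (theta t1 Dl (n+1)) x' - clampr (theta t1 Dl 1) (theta t1 Dl (n+1)) x) / Dl"
    unfolding eq sum_divide_distrib[symmetric] clamp_telescope[OF assms(1)] ..
  also have "\<dots> \<le> (x' - x) / Dl"
    using clamp_lip[OF le assms(2)] assms(1) by (simp add: divide_right_mono)
  finally show ?thesis .
qed

lemma hh_abs_lip: assumes "Dl > 0"
  shows "\<bar>hh t1 Dl k x - hh t1 Dl k x'\<bar> \<le> \<bar>x - x'\<bar> / Dl"
proof (cases "x \<le> x'")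
  case True then show ?thesis using hh_lip[OF assms True, of t1 k] by auto
next
  case False then have F: "x' \<le> x" by simp
  show ?thesis using hh_lip[OF assms F, of t1 k] False by auto
qed

lemma hh_abs_sum: assumes "Dl > 0"
  shows "(\<Sum>k=1..n. \<bar>hh t1 Dl k x - hh t1 Dl k x'\<bar>) \<le> \<bar>x - x'\<bar> / Dl"
proof (cases "x \<le> x'")
  case True
  have "(\<Sum>k=1..n. \<bar>hh t1 Dl k x - hh t1 Dl k x'\<bar>) = (\<Sum>k=1..n. hh t1 Dl k x - hh t1 Dl k x')"
    using hh_lip[OF assms True] by (intro sum.cong) auto
  then show ?thesis using hh_sum[OF assms True] True by auto
next
  case False then have F: "x' \<le> x" by simp
  have "(\<Sum>k=1..n. \<bar>hh t1 Dl k x - hh t1 Dl k x'\<bar>) = (\<Sum>k=1..n. hh t1 Dl k x' - hh t1 Dl k x)"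
    using hh_lip[OF assms F] by (intro sum.cong) auto
  then show ?thesis using hh_sum[OF assms F] F by auto
qed


lemma cdf_cpd:
  assumes Dl: "Dl > 0" and k: "1 \<le> k" "k < d"
  shows "cdf_vec (cat_proj_dirac t1 Dl d x) k = hh t1 Dl k x"
proof -
  have th1: "theta t1 Dl 1 = t1" by (simp add: theta_def)
  have mono: "\<And>i j. i \<le> j \<Longrightarrow> theta t1 Dl i \<le> theta t1 Dl j" using theta_le[OF Dl] by blast
  have tS: "theta t1 Dl (k+1) = theta t1 Dl k + Dl" using theta_Suc[of t1 Dl k] by simp
  consider (a) "x \<le> theta t1 Dl 1" | (b) "\<not> x \<le> theta t1 Dl 1" "x \<ge> theta t1 Dl d"
    | (c) "\<not> x \<le> theta t1 Dl 1" "\<not> x \<ge> theta t1 Dl d" by blast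
  then show ?thesis
  proof cases
    case a
    have "x \<le> theta t1 Dl k" using a mono[of 1 k] k by simp
    then have "hh t1 Dl k x = 1" using Dl tS by (simp add: hh_def clampr_def)
    moreover have "cdf_vec (cat_proj_dirac t1 Dl d x) k = 1"
      unfolding cdf_vec_def cat_proj_dirac_def using a k by simp
    ultimately show ?thesis by simp
  next
    case b
    have "x \<ge> theta t1 Dl (k+1)" using b mono[of "k+1" d] k by simp
    then have "hh t1 Dl k x = 0" using Dl tS by (simp add: hh_def clampr_def)
    moreover have "cdf_vec (cat_proj_dirac t1 Dl d x) k = 0"
      unfolding cdf_vec_def cat_proj_dirac_def using b k by simp
    ultimately show ?thesis by simp
  next
    case c
    define r where "r = (x - t1) / Dl"
    have rpos: "r > 0" using c th1 Dl by (simp add: r_def)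
    define j where "j = nat \<lfloor>r\<rfloor> + 1"
    have fl: "real j - 1 = of_int \<lfloor>r\<rfloor>" using rpos by (simp add: j_def)
    have j1: "j \<ge> 1" by (simp add: j_def)
    have lo: "theta t1 Dl j \<le> x"
    proof -
      have "(real j - 1) * Dl \<le> r * Dl" using fl Dl by simp
      then show ?thesis using Dl by (simp add: theta_def r_def)
    qed
    have hi: "x < theta t1 Dl (j+1)"
    proof -
      have "r < real j" using fl by linarith
      then have "r * Dl < real j * Dl" using Dl by simp
      then show ?thesis using Dl by (simp add: theta_def r_def)
    qed
    define A where "A = (theta t1 Dl (j+1) - x) / Dl"
    define B where "B = (x - theta t1 Dl j) / Dl"
    have AB: "A + B = 1" using Dl theta_Suc[of t1 Dl j] by (simp add: A_def B_def field_simps)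
    have cpd: "cat_proj_dirac t1 Dl d x = (\<lambda>i. (if i = j then A else 0) + (if i = j + 1 then B else 0))"
      using c by (auto simp: cat_proj_dirac_def Let_def j_def r_def A_def B_def)
    have S: "cdf_vec (cat_proj_dirac t1 Dl d x) k = (if j \<le> k then A else 0) + (if j + 1 \<le> k then B else 0)"
      unfolding cpd cdf_vec_def sum.distrib using j1 by simp
    consider (lt) "k < j" | (eq) "k = j" | (gt) "j + 1 \<le> k" by linarith
    then show ?thesis
    proof cases
      case lt
      have "x \<ge> theta t1 Dl (k+1)" using lo mono[of "k+1" j] lt by simp
      then have "hh t1 Dl k x = 0" using Dl tS by (simp add: hh_def clampr_def)
      then show ?thesis using S lt by simp
    next
      case eq
      have "hh t1 Dl k x = A" using lo hi eq by (simp add: hh_def clampr_def A_def)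
      then show ?thesis using S eq by simp
    next
      case gt
      have "x \<le> theta t1 Dl k" using hi mono[of "j+1" k] gt by simp
      then have "hh t1 Dl k x = 1" using Dl tS by (simp add: hh_def clampr_def)
      then show ?thesis using S gt AB by simp
    qed
  qed
qed

lemma cdf_L:
  assumes "Dl > 0" "1 \<le> k" "k < d"
  shows "cdf_vec (L_shift t1 Dl d b u) k = (\<Sum>j=1..d. u j * hh t1 Dl k (theta t1 Dl j + b))"
proof -
  have "cdf_vec (L_shift t1 Dl d b u) k = (\<Sum>j=1..d. u j * cdf_vec (cat_proj_dirac t1 Dl d (theta t1 Dl j + b)) k)"
    unfolding cdf_vec_def L_shift_def sum_distrib_left by (rule sum.swap)
  then show ?thesis using cdf_cpd[OF assms] by simp
qed

lemma abel:
  fixes F a :: "nat \<Rightarrow> real"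
  shows "(\<Sum>j=1..Suc m. (F j - F (j-1)) * a j) = F (Suc m) * a (Suc m) - F 0 * a 1 + (\<Sum>j=1..m. F j * (a j - a (Suc j)))"
proof (induction m)
  case 0 then show ?case by (simp add: algebra_simps)
next
  case (Suc m)
  have "(\<Sum>j=1..Suc (Suc m). (F j - F (j-1)) * a j) = (\<Sum>j=1..Suc m. (F j - F (j-1)) * a j) + (F (Suc (Suc m)) - F (Suc m)) * a (Suc (Suc m))"
    by simp
  then show ?case using Suc by (simp add: algebra_simps)
qed

lemma schur:
  fixes w :: "'k \<Rightarrow> 'j \<Rightarrow> real" and F :: "'j \<Rightarrow> real"
  assumes "finite K" "finite J" "\<And>k j. k \<in> K \<Longrightarrow> j \<in> J \<Longrightarrow> 0 \<le> w k j"
    and row: "\<And>k. k \<in> K \<Longrightarrow> (\<Sum>j\<in>J. w k j) \<le> 1"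
    and col: "\<And>j. j \<in> J \<Longrightarrow> (\<Sum>k\<in>K. w k j) \<le> 1"
  shows "(\<Sum>k\<in>K. (\<Sum>j\<in>J. w k j * F j)^2) \<le> (\<Sum>j\<in>J. (F j)^2)"
proof -
  have 1: "(\<Sum>j\<in>J. w k j * F j)^2 \<le> (\<Sum>j\<in>J. w k j * (F j)^2)" if kK: "k \<in> K" for k
  proof -
    have "(\<Sum>j\<in>J. w k j * F j) = (\<Sum>j\<in>J. sqrt (w k j) * (sqrt (w k j) * F j))"
      using assms(3)[OF kK] by (intro sum.cong) (auto simp: mult.assoc[symmetric])
    then have "(\<Sum>j\<in>J. w k j * F j)^2 \<le> (\<Sum>j\<in>J. (sqrt (w k j))^2) * (\<Sum>j\<in>J. (sqrt (w k j) * F j)^2)"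
      using Cauchy_Schwarz_ineq_sum by metis
    also have "\<dots> = (\<Sum>j\<in>J. w k j) * (\<Sum>j\<in>J. w k j * (F j)^2)"
      using assms(3)[OF kK] by (simp add: power_mult_distrib)
    also have "\<dots> \<le> 1 * (\<Sum>j\<in>J. w k j * (F j)^2)"
      using row[OF kK] assms(3)[OF kK] by (intro mult_right_mono sum_nonneg) auto
    finally show ?thesis by simp
  qed
  have "(\<Sum>k\<in>K. (\<Sum>j\<in>J. w k j * F j)^2) \<le> (\<Sum>k\<in>K. \<Sum>j\<in>J. w k j * (F j)^2)"
    using 1 by (rule sum_mono)
  also have "\<dots> = (\<Sum>j\<in>J. (\<Sum>k\<in>K. w k j) * (F j)^2)"
    by (subst sum.swap) (simp add: sum_distrib_right)
  also have "\<dots> \<le> (\<Sum>j\<in>J. 1 * (F j)^2)"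
    using col by (intro sum_mono mult_right_mono) auto
  finally show ?thesis by simp
qed


lemma tele: "(\<Sum>j=1..m. (a j - a (Suc j)) :: real) = a 1 - a (Suc m)"
  by (induction m) auto

lemma cdf_diff: "1 \<le> j \<Longrightarrow> cdf_vec u j - cdf_vec u (j - 1) = u j"
  by (cases j) (auto simp: cdf_vec_def)

lemma part1:
  assumes Dl: "Dl > 0" and p: "p \<in> simplex d" and q: "q \<in> simplex d"
  shows "(\<Sum>k=1..d-1. (cdf_vec (L_shift t1 Dl d b p) k - cdf_vec (L_shift t1 Dl d b q) k)^2)
     \<le> (\<Sum>k=1..d-1. (cdf_vec p k - cdf_vec q k)^2)"
proof -
  have "d \<noteq> 0"
  proof
    assume "d = 0" with p show False by (simp add: simplex_def)
  qed
  then obtain m where d: "d = Suc m" by (cases d) auto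
  define F where "F j = cdf_vec p j - cdf_vec q j" for j
  define a where "a k j = hh t1 Dl k (theta t1 Dl j + b)" for k j
  define w where "w k j = a k j - a k (Suc j)" for k j
  have F0: "F 0 = 0" by (simp add: F_def cdf_vec_def)
  have Fd: "F (Suc m) = 0" using p q d by (simp add: F_def cdf_vec_def simplex_def)
  have pq: "p j - q j = F j - F (j-1)" if "j \<in> {1..Suc m}" for j
  proof -
    have j: "1 \<le> j" using that by simp
    show ?thesis using cdf_diff[OF j, of p] cdf_diff[OF j, of q] unfolding F_def by linarith
  qed
  have eqk: "cdf_vec (L_shift t1 Dl d b p) k - cdf_vec (L_shift t1 Dl d b q) k = (\<Sum>j\<in>{1..m}. w k j * F j)"
    if k: "k \<in> {1..m}" for k
  proof -
    have "cdf_vec (L_shift t1 Dl d b p) k - cdf_vec (L_shift t1 Dl d b q) k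
        = (\<Sum>j=1..Suc m. (p j - q j) * a k j)"
      using k d cdf_L[OF Dl, of k d] by (simp add: a_def sum_subtractf algebra_simps)
    also have "\<dots> = (\<Sum>j=1..Suc m. (F j - F (j-1)) * a k j)"
      using pq by (intro sum.cong) auto
    also have "\<dots> = (\<Sum>j\<in>{1..m}. w k j * F j)"
      unfolding abel F0 Fd w_def by (simp add: mult.commute)
    finally show ?thesis .
  qed
  have wnn: "0 \<le> w k j" for k j
    using hh_lip[OF Dl, of "theta t1 Dl j + b" "theta t1 Dl (Suc j) + b" t1 k] theta_le[OF Dl, of j "Suc j" t1]
    by (simp add: w_def a_def)
  have row: "(\<Sum>j\<in>{1..m}. w k j) \<le> 1" for k
  proof -
    have "(\<Sum>j\<in>{1..m}. w k j) = a k 1 - a k (Suc m)" unfolding w_def by (rule tele)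
    then show ?thesis using hh_bounds[OF Dl, of t1 k "theta t1 Dl 1 + b"] hh_bounds[OF Dl, of t1 k "theta t1 Dl (Suc m) + b"]
      by (simp add: a_def)
  qed
  have col: "(\<Sum>k\<in>{1..m}. w k j) \<le> 1" for j
  proof -
    define x where "x = theta t1 Dl j + b"
    have "(\<Sum>k\<in>{1..m}. w k j) = (\<Sum>k=1..m. hh t1 Dl k x - hh t1 Dl k (x + Dl))"
      by (simp add: w_def a_def theta_Suc x_def add_ac)
    also have "\<dots> \<le> ((x + Dl) - x) / Dl"
      by (rule hh_sum[OF Dl]) (use Dl in simp)
    finally have "(\<Sum>k\<in>{1..m}. w k j) \<le> ((x + Dl) - x) / Dl" .
    then show ?thesis using Dl by simp
  qed
  have "(\<Sum>k=1..d-1. (cdf_vec (L_shift t1 Dl d b p) k - cdf_vec (L_shift t1 Dl d b q) k)^2)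
      = (\<Sum>k\<in>{1..m}. (\<Sum>j\<in>{1..m}. w k j * F j)^2)"
    using eqk d by (intro sum.cong) auto
  also have "\<dots> \<le> (\<Sum>j\<in>{1..m}. (F j)^2)"
    by (rule schur) (use wnn row col in auto)
  finally show ?thesis using d by (simp add: F_def)
qed

lemma part2:
  assumes Dl: "Dl > 0" and q: "q \<in> simplex d"
  shows "(\<Sum>k=1..d-1. (cdf_vec (L_shift t1 Dl d b q) k - cdf_vec (L_shift t1 Dl d b' q) k)^2)
     \<le> (\<bar>b - b'\<bar> / Dl)^2"
proof -
  define c where "c = \<bar>b - b'\<bar> / Dl"
  have c0: "c \<ge> 0" using Dl by (simp add: c_def)
  have qnn: "\<And>j. j \<in> {1..d} \<Longrightarrow> 0 \<le> q j" and qs: "(\<Sum>j=1..d. q j) = 1" using q by (auto simp: simplex_def)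
  define g where "g k j = \<bar>hh t1 Dl k (theta t1 Dl j + b) - hh t1 Dl k (theta t1 Dl j + b')\<bar>" for k j
  define E where "E k = (\<Sum>j=1..d. q j * g k j)" for k
  have gl: "g k j \<le> c" for k j using hh_abs_lip[OF Dl, of t1 k "theta t1 Dl j + b" "theta t1 Dl j + b'"] by (simp add: g_def c_def)
  have D: "\<bar>cdf_vec (L_shift t1 Dl d b q) k - cdf_vec (L_shift t1 Dl d b' q) k\<bar> \<le> E k"
    if k: "k \<in> {1..d-1}" for k
  proof -
    have eq: "cdf_vec (L_shift t1 Dl d b q) k - cdf_vec (L_shift t1 Dl d b' q) k
       = (\<Sum>j=1..d. q j * (hh t1 Dl k (theta t1 Dl j + b) - hh t1 Dl k (theta t1 Dl j + b')))"
    proof -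
      have k1: "1 \<le> k" "k < d" using k by auto
      show ?thesis unfolding cdf_L[OF Dl k1] right_diff_distrib sum_subtractf ..
    qed
    have "\<bar>cdf_vec (L_shift t1 Dl d b q) k - cdf_vec (L_shift t1 Dl d b' q) k\<bar> \<le> (\<Sum>j=1..d. \<bar>q j * (hh t1 Dl k (theta t1 Dl j + b) - hh t1 Dl k (theta t1 Dl j + b'))\<bar>)"
      unfolding eq by (rule sum_abs)
    also have "\<dots> = E k" unfolding E_def g_def using qnn by (intro sum.cong) (auto simp: abs_mult)
    finally show ?thesis .
  qed
  have E0: "0 \<le> E k" for k unfolding E_def g_def using qnn by (intro sum_nonneg) auto
  have Ec: "E k \<le> c" for k
  proof -
    have "E k \<le> (\<Sum>j=1..d. q j * c)" unfolding E_def using qnn gl by (intro sum_mono mult_left_mono) auto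
    also have "\<dots> = c" using qs by (simp add: sum_distrib_right[symmetric])
    finally show ?thesis .
  qed
  have gs: "(\<Sum>k=1..d-1. g k j) \<le> c" for j
    unfolding g_def c_def by (rule order_trans[OF hh_abs_sum[OF Dl]]) simp
  have Es: "(\<Sum>k=1..d-1. E k) \<le> c"
  proof -
    have "(\<Sum>k=1..d-1. E k) = (\<Sum>j=1..d. q j * (\<Sum>k=1..d-1. g k j))"
      unfolding E_def sum_distrib_left by (rule sum.swap)
    also have "\<dots> \<le> (\<Sum>j=1..d. q j * c)"
      using qnn gs by (intro sum_mono mult_left_mono) auto
    also have "\<dots> = c" using qs by (simp add: sum_distrib_right[symmetric])
    finally show ?thesis .
  qed
  have "(\<Sum>k=1..d-1. (cdf_vec (L_shift t1 Dl d b q) k - cdf_vec (L_shift t1 Dl d b' q) k)^2)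
     \<le> (\<Sum>k=1..d-1. c * E k)"
  proof (rule sum_mono)
    fix k assume k: "k \<in> {1..d-1}"
    have "(cdf_vec (L_shift t1 Dl d b q) k - cdf_vec (L_shift t1 Dl d b' q) k)^2 \<le> (E k)^2"
      using power_mono[OF D[OF k] abs_ge_zero, of 2] by (simp only: power2_abs)
    also have "\<dots> \<le> c * E k" using Ec[of k] E0[of k] by (simp add: power2_eq_square mult_right_mono)
    finally show "(cdf_vec (L_shift t1 Dl d b q) k - cdf_vec (L_shift t1 Dl d b' q) k)^2 \<le> c * E k" .
  qed
  also have "\<dots> \<le> c * c" using Es c0 by (simp add: sum_distrib_left[symmetric] mult_left_mono)
  finally show ?thesis by (simp add: c_def power2_eq_square)
qed


lemma cramer_L2: "cramer_dist Dl d u v = sqrt Dl * L2_set (\<lambda>k. cdf_vec u k - cdf_vec v k) {1..d-1}"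
  by (simp add: cramer_dist_def L2_set_def real_sqrt_mult)

theorem lemma6:
  fixes t1 Dl b b' :: real and d :: nat and p q :: "nat \<Rightarrow> real"
  assumes "Dl > 0"
    and "p \<in> simplex d" and "q \<in> simplex d"
  shows "cramer_dist Dl d (L_shift t1 Dl d b p) (L_shift t1 Dl d b' q)
           \<le> cramer_dist Dl d p q + \<bar>b - b'\<bar> / sqrt Dl"
proof -
  define K where "K = {1..d-1}"
  define X where "X k = cdf_vec (L_shift t1 Dl d b p) k - cdf_vec (L_shift t1 Dl d b q) k" for k
  define Y where "Y k = cdf_vec (L_shift t1 Dl d b q) k - cdf_vec (L_shift t1 Dl d b' q) k" for k
  have sD: "sqrt Dl > 0" using assms(1) by simp
  have "cramer_dist Dl d (L_shift t1 Dl d b p) (L_shift t1 Dl d b' q) = sqrt Dl * L2_set (\<lambda>k. X k + Y k) K"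
    unfolding cramer_L2 X_def Y_def K_def by simp
  also have "\<dots> \<le> sqrt Dl * (L2_set X K + L2_set Y K)"
    using sD L2_set_triangle_ineq[of X Y K] by (intro mult_left_mono) auto
  also have "L2_set X K \<le> L2_set (\<lambda>k. cdf_vec p k - cdf_vec q k) K"
    unfolding L2_set_def X_def K_def
    using part1[OF assms, of t1 b] by (simp add: real_sqrt_le_iff)
  also have "L2_set Y K \<le> \<bar>b - b'\<bar> / Dl"
  proof -
    have "L2_set Y K \<le> sqrt ((\<bar>b - b'\<bar> / Dl)^2)"
      unfolding L2_set_def Y_def K_def
      using part2[OF assms(1) assms(3), of t1 b b'] by (simp only: real_sqrt_le_iff)
    also have "\<dots> = \<bar>b - b'\<bar> / Dl" using assms(1) by simp
    finally show ?thesis .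
  qed
  finally have "cramer_dist Dl d (L_shift t1 Dl d b p) (L_shift t1 Dl d b' q)
     \<le> sqrt Dl * (L2_set (\<lambda>k. cdf_vec p k - cdf_vec q k) K + \<bar>b - b'\<bar> / Dl)"
    using sD by (simp add: mult_left_mono)
  also have "\<dots> = cramer_dist Dl d p q + \<bar>b - b'\<bar> / sqrt Dl"
  proof -
    have "sqrt Dl * (\<bar>b - b'\<bar> / Dl) = \<bar>b - b'\<bar> / sqrt Dl"
      using assms(1) by (simp add: field_simps real_sqrt_mult[symmetric])
    then show ?thesis unfolding cramer_L2 K_def by (simp add: distrib_left)
  qed
  finally show ?thesis .
qed

end
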